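(* For every $(x_n)\in\ell_1^{*}$ there exists an ideal $I$ on $\mathbb{N}$ with $\mathrm{Fin}\subseteq I$ and $I\neq\mathrm{Fin}$ such that $A_I(x_n)$ is meager and has Lebesgue measure zero.
   Context: $\ell_1^{*}=\{(x_n)\in\ell_1 : x_n\neq 0\text{ for every }n\}$. An ideal on $\mathbb{N}$ is a family $I\subseteq P(\mathbb{N})$ closed under finite unions and subsets with $\mathbb{N}\notin I$; $\mathrm{Fin}$ is the ideal of finite sets. $A_I(x_n)=\{\sum_{n\in A}x_n : A\in I\}$. *)

theory Defs
  imports "HOL-Analysis.Analysis"
begin

definition nowhere_dense :: "real set \<Rightarrow> bool" where
  "nowhere_dense S \<longleftrightarrow> interior (closure S) = {}"

definition meager :: "real set \<Rightarrow> bool" where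
  "meager S \<longleftrightarrow> (\<exists>F. countable F \<and> (\<forall>T\<in>F. nowhere_dense T) \<and> S \<subseteq> \<Union>F)"

definition is_ideal :: "nat set set \<Rightarrow> bool" where
  "is_ideal I \<longleftrightarrow> (\<forall>A\<in>I. \<forall>B\<in>I. A \<union> B \<in> I) \<and> (\<forall>A\<in>I. \<forall>B. B \<subseteq> A \<longrightarrow> B \<in> I)
     \<and> UNIV \<notin> I"

definition Fin :: "nat set set" where
  "Fin = {A. finite A}"

definition l1_star :: "(nat \<Rightarrow> real) set" where
  "l1_star = {x. summable (\<lambda>n. \<bar>x n\<bar>) \<and> (\<forall>n. x n \<noteq> 0)}"

definition A_I :: "nat set set \<Rightarrow> (nat \<Rightarrow> real) \<Rightarrow> real set" where
  "A_I I x = {(\<Sum>\<^sub>\<infinity>n\<in>A. x n) | A. A \<in> I}"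

end

theory Submission imports Defs begin
lemma cover_negl:
  fixes S :: "real set"
  assumes "\<And>k. \<exists>P. finite P \<and> card P \<le> 2^k \<and> S \<subseteq> (\<Union>p\<in>P. {p - (1/8)^k .. p + (1/8)^k})"
  shows "negligible (closure S)"
proof (subst negligible_outer_le, intro allI impI)
  fix e :: real assume e: "e > 0"
  have "(\<lambda>k. 2 * (1/4::real)^k) \<longlonglongrightarrow> 0"
    by (intro tendsto_mult_right_zero LIMSEQ_power_zero) auto
  from order_tendstoD(2)[OF this e] have "\<exists>N. \<forall>n\<ge>N. 2 * (1/4::real)^n < e"
    by (simp add: eventually_sequentially)
  then obtain k where k: "2 * (1/4::real)^k < e" by blast
  obtain P where P: "finite P" "card P \<le> 2^k" "S \<subseteq> (\<Union>p\<in>P. {p - (1/8)^k .. p + (1/8)^k})"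
    using assms by blast
  define T where "T = (\<Union>p\<in>P. {p - (1/8::real)^k .. p + (1/8)^k})"
  have cT: "closed T" unfolding T_def using P(1) by (intro closed_UN) auto
  have "closure S \<subseteq> T" using P(3) cT unfolding T_def by (simp add: closure_minimal)
  moreover have "T \<in> lmeasurable" unfolding T_def using P(1) by (intro fmeasurable.finite_UN) auto
  moreover have "measure lebesgue T \<le> e"
  proof -
    have "measure lebesgue T \<le> (\<Sum>p\<in>P. measure lebesgue {p - (1/8::real)^k .. p + (1/8)^k})"
      unfolding T_def using P(1) by (intro measure_UNION_le) auto
    also have "\<dots> = card P * (2 * (1/8)^k)" by simp
    also have "\<dots> \<le> 2^k * (2 * (1/8)^k)"
    proof -
      have "real (card P) \<le> real (2^k)" using P(2) by (simp only: of_nat_le_iff)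
      then have "real (card P) \<le> 2^k" by simp
      moreover have "(0::real) \<le> 2 * (1/8)^k" by simp
      ultimately show ?thesis by (rule mult_right_mono)
    qed
    also have "\<dots> = 2 * (1/4::real)^k" by (simp add: power_divide field_simps flip: power_mult_distrib)
    finally show ?thesis using k by linarith
  qed
  ultimately show "\<exists>T. closure S \<subseteq> T \<and> T \<in> lmeasurable \<and> measure lebesgue T \<le> e" by blast
qed

lemma negl_interior: "negligible (S::real set) \<Longrightarrow> interior S = {}"
  by (metis interior_subset negligible_subset open_interior open_not_negligible)

locale tl1 =
  fixes x :: "nat \<Rightarrow> real"
  assumes sx: "summable (\<lambda>n. \<bar>x n\<bar>)"
begin

lemma sum_on: "x summable_on UNIV"
  using norm_summable_imp_summable_on[of x] sx by simp

lemma sum_on_sub: "x summable_on A"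
  using summable_on_subset[OF sum_on subset_UNIV] .

lemma asum_on: "(\<lambda>n. \<bar>x n\<bar>) summable_on UNIV"
  using norm_summable_imp_summable_on[of "\<lambda>n. \<bar>x n\<bar>"] sx by simp

lemma asum_on_sub: "(\<lambda>n. \<bar>x n\<bar>) summable_on A"
  using summable_on_subset[OF asum_on subset_UNIV] .

definition tail :: "nat \<Rightarrow> real" where "tail N = (\<Sum>\<^sub>\<infinity>j\<in>{N..}. \<bar>x j\<bar>)"

lemma bound: assumes "C \<subseteq> {N..}" shows "\<bar>infsum x C\<bar> \<le> tail N"
proof -
  have "\<bar>infsum x C\<bar> \<le> (\<Sum>\<^sub>\<infinity>j\<in>C. norm (x j))"
    using norm_infsum_bound[of x C] asum_on_sub by simp
  also have "\<dots> \<le> tail N" unfolding tail_def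
    using assms by (intro infsum_mono_neutral) (auto intro: asum_on_sub)
  finally show ?thesis .
qed

lemma tail_anti: "N \<le> M \<Longrightarrow> tail M \<le> tail N"
  unfolding tail_def by (intro infsum_mono_neutral asum_on_sub) auto

lemma tail_lim: "tail \<longlonglongrightarrow> 0"
proof -
  have eq: "tail N = (\<Sum>\<^sub>\<infinity>j. \<bar>x j\<bar>) - (\<Sum>j<N. \<bar>x j\<bar>)" for N
  proof -
    have "(\<Sum>\<^sub>\<infinity>j. \<bar>x j\<bar>) = (\<Sum>\<^sub>\<infinity>j\<in>{..<N} \<union> {N..}. \<bar>x j\<bar>)"
    proof -
      have "{..<N} \<union> {N..} = (UNIV::nat set)" by auto
      then show ?thesis by simp
    qed
    also have "\<dots> = (\<Sum>\<^sub>\<infinity>j\<in>{..<N}. \<bar>x j\<bar>) + tail N" unfolding tail_def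
    proof -
      have d: "{..<N} \<inter> {N..} = ({}::nat set)" by auto
      show "(\<Sum>\<^sub>\<infinity>j\<in>{..<N} \<union> {N..}. \<bar>x j\<bar>) = (\<Sum>\<^sub>\<infinity>j\<in>{..<N}. \<bar>x j\<bar>) + (\<Sum>\<^sub>\<infinity>j\<in>{N..}. \<bar>x j\<bar>)"
        by (rule infsum_Un_disjoint[OF asum_on_sub asum_on_sub d])
    qed
    also have "(\<Sum>\<^sub>\<infinity>j\<in>{..<N}. \<bar>x j\<bar>) = (\<Sum>j<N. \<bar>x j\<bar>)" by (rule infsum_finite) simp
    finally show ?thesis by linarith
  qed
  have "(\<Sum>\<^sub>\<infinity>j. \<bar>x j\<bar>) = (\<Sum>j. \<bar>x j\<bar>)"
  proof -
    have s1: "summable (\<lambda>n. norm \<bar>x n\<bar>)" using sx by simp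
    have "((\<lambda>j. \<bar>x j\<bar>) has_sum (\<Sum>j. \<bar>x j\<bar>)) UNIV"
      by (rule norm_summable_imp_has_sum[OF s1 summable_sums[OF sx]])
    then show ?thesis by (rule infsumI)
  qed
  then have "(\<lambda>N. (\<Sum>j<N. \<bar>x j\<bar>)) \<longlonglongrightarrow> (\<Sum>\<^sub>\<infinity>j. \<bar>x j\<bar>)"
    using summable_LIMSEQ[OF sx] by simp
  then have "(\<lambda>N. (\<Sum>\<^sub>\<infinity>j. \<bar>x j\<bar>) - (\<Sum>j<N. \<bar>x j\<bar>)) \<longlonglongrightarrow> (\<Sum>\<^sub>\<infinity>j. \<bar>x j\<bar>) - (\<Sum>\<^sub>\<infinity>j. \<bar>x j\<bar>)"
    by (intro tendsto_diff tendsto_const)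
  moreover have "tail = (\<lambda>N. (\<Sum>\<^sub>\<infinity>j. \<bar>x j\<bar>) - (\<Sum>j<N. \<bar>x j\<bar>))"
    by (rule ext) (rule eq)
  ultimately show ?thesis by (simp only: diff_self)
qed

lemma ex_N: "\<exists>N. tail N \<le> (1/8)^k"
proof -
  have "(0::real) < (1/8)^k" by simp
  with tail_lim obtain N where "\<forall>M\<ge>N. dist (tail M) 0 < (1/8)^k"
    unfolding LIMSEQ_def by blast
  then have "dist (tail N) 0 < (1/8)^k" by blast
  then have "tail N < (1/8)^k" unfolding dist_real_def using abs_ge_self[of "tail N - 0"] by linarith
  then show ?thesis by (intro exI[of _ N]) simp
qed


lemma split_sum: "infsum x A = infsum x (A \<inter> C) + infsum x (A - C)"
proof -
  have "infsum x ((A \<inter> C) \<union> (A - C)) = infsum x (A \<inter> C) + infsum x (A - C)"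
    by (rule infsum_Un_disjoint) (auto intro: sum_on_sub)
  then show ?thesis by (simp add: Int_Diff_Un)
qed

definition g :: "nat \<Rightarrow> nat" where "g k = (SOME N. tail N \<le> (1/8)^k)"
definition nn :: "nat \<Rightarrow> nat" where "nn k = (\<Sum>i\<le>k. g i) + 3*k"

lemma g_tail: "tail (g k) \<le> (1/8)^k"
  unfolding g_def by (rule someI_ex[OF ex_N])

lemma nn_tail: "tail (nn k) \<le> (1/8)^k"
proof -
  have gk: "g k \<le> nn k" unfolding nn_def
    using member_le_sum[of k "{..k}" g] by auto
  show ?thesis using tail_anti[OF gk] g_tail[of k] by linarith
qed

lemma nn_Suc: "nn (Suc k) \<ge> nn k + 3"
  unfolding nn_def by simp

lemma nn_mono: assumes "j \<le> k" shows "nn j \<le> nn k"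
proof -
  have h: "\<And>n. nn n \<le> nn (Suc n)"
  proof -
    fix n show "nn n \<le> nn (Suc n)" using nn_Suc[of n] by linarith
  qed
  show ?thesis by (rule lift_Suc_mono_le[of nn, OF h assms])
qed

lemma nn_strict: "j < k \<Longrightarrow> nn j < nn k"
  using nn_mono[of "Suc j" k] nn_Suc[of j] by simp

lemma nn_inj: "inj nn"
proof -
  have "strict_mono nn" by (rule strict_monoI) (rule nn_strict)
  then show ?thesis by (rule strict_mono_imp_inj_on)
qed

lemma gap: "nn k + 1 \<notin> range nn"
proof
  assume "nn k + 1 \<in> range nn"
  then obtain j where j: "nn j = nn k + 1" by auto
  show False
  proof (cases "j \<le> k")
    case True then show ?thesis using nn_mono[of j k] j by simp
  next
    case False then show ?thesis using nn_mono[of "Suc k" j] nn_Suc[of k] j by simp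
  qed
qed

definition Id :: "nat set set" where "Id = {A. finite (A - range nn)}"

lemma Id_ideal: "is_ideal Id"
proof -
  have "infinite (UNIV - range nn)"
  proof
    assume "finite (UNIV - range nn)"
    moreover have "range (\<lambda>k. nn k + 1) \<subseteq> UNIV - range nn" using gap by auto
    moreover have "inj (\<lambda>k. nn k + 1)" using nn_inj by (simp add: inj_def)
    ultimately show False using finite_subset[of "range (\<lambda>k. nn k + 1)"] range_inj_infinite[of "\<lambda>k. nn k + 1"] by simp
  qed
  moreover have "finite ((A \<union> B) - range nn)" if "finite (A - range nn)" "finite (B - range nn)" for A B
    using that by (simp add: Un_Diff)
  moreover have "finite (B - range nn)" if "finite (A - range nn)" "B \<subseteq> A" for A B :: "nat set"
    using that by (meson Diff_mono finite_subset order_refl)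
  ultimately show ?thesis unfolding is_ideal_def Id_def by blast
qed

lemma Id_Fin: "Fin \<subseteq> Id" "Id \<noteq> Fin"
proof -
  show "Fin \<subseteq> Id" unfolding Fin_def Id_def by auto
  have "range nn \<in> Id" unfolding Id_def by simp
  moreover have "range nn \<notin> Fin" unfolding Fin_def using nn_inj range_inj_infinite by auto
  ultimately show "Id \<noteq> Fin" by blast
qed

definition E :: "real set" where "E = {infsum x B | B. B \<subseteq> range nn}"

lemma E_cover: "\<exists>P. finite P \<and> card P \<le> 2^k \<and> (+) c ` E \<subseteq> (\<Union>p\<in>P. {p - (1/8)^k .. p + (1/8)^k})"
proof -
  define K where "K = nn ` {..<k}"
  define P where "P = (\<lambda>G. c + sum x G) ` Pow K"
  have fK: "finite K" and cK: "card K \<le> k" unfolding K_def using card_image_le[of "{..<k}" nn] by auto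
  have "finite P" unfolding P_def using fK by simp
  moreover have "card P \<le> 2^k"
  proof -
    have "card P \<le> card (Pow K)" unfolding P_def using fK by (intro card_image_le) simp
    also have "\<dots> = 2 ^ card K" using fK by (simp add: card_Pow)
    also have "\<dots> \<le> 2^k" using cK by (simp add: power_increasing)
    finally show ?thesis .
  qed
  moreover have "(+) c ` E \<subseteq> (\<Union>p\<in>P. {p - (1/8)^k .. p + (1/8)^k})"
  proof
    fix y assume "y \<in> (+) c ` E"
    then obtain B where B: "B \<subseteq> range nn" "y = c + infsum x B" unfolding E_def by auto
    have "infsum x B = infsum x (B \<inter> K) + infsum x (B - K)" by (rule split_sum)
    also have "infsum x (B \<inter> K) = sum x (B \<inter> K)" using fK by simp
    finally have eq: "infsum x B = sum x (B \<inter> K) + infsum x (B - K)" .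
    have "B - K \<subseteq> {nn k..}"
    proof
      fix i assume "i \<in> B - K"
      then obtain j where "i = nn j" "j \<ge> k" using B(1) unfolding K_def by force
      then show "i \<in> {nn k..}" using nn_mono by auto
    qed
    then have "\<bar>infsum x (B - K)\<bar> \<le> (1/8)^k" using bound[of "B - K" "nn k"] nn_tail[of k] by linarith
    moreover have hP: "c + sum x (B \<inter> K) \<in> P" unfolding P_def by auto
    moreover have hy: "y \<in> {(c + sum x (B \<inter> K)) - (1/8)^k .. (c + sum x (B \<inter> K)) + (1/8)^k}"
      using B(2) eq calculation(1) by (simp add: abs_le_iff)
    show "y \<in> (\<Union>p\<in>P. {p - (1/8)^k .. p + (1/8)^k})" by (rule UN_I[where B="\<lambda>p. {p - (1/8)^k .. p + (1/8)^k}", OF hP hy])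
  qed
  ultimately show ?thesis by blast
qed

lemma main:
  "\<exists>I. is_ideal I \<and> Fin \<subseteq> I \<and> I \<noteq> Fin \<and> meager (A_I I x) \<and> A_I I x \<in> null_sets lebesgue"
proof -
  define F where "F = (\<lambda>G. closure ((+) (sum x G) ` E)) ` {G. finite G}"
  have cF: "countable F" unfolding F_def by (intro countable_image countable_Collect_finite)
  have nF: "negligible T" if "T \<in> F" for T
  proof -
    have "T \<in> (\<lambda>G. closure ((+) (sum x G) ` E)) ` {G. finite G}" using that F_def by simp
    then obtain G where T: "T = closure ((+) (sum x G) ` E)" by blast
    show ?thesis unfolding T by (rule cover_negl) (rule E_cover)
  qed
  have sub: "A_I Id x \<subseteq> \<Union>F"
  proof
    fix y assume "y \<in> A_I Id x"
    then obtain A where A: "finite (A - range nn)" "y = infsum x A" unfolding A_I_def Id_def by auto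
    have "infsum x A = infsum x (A \<inter> range nn) + infsum x (A - range nn)" by (rule split_sum)
    also have "infsum x (A - range nn) = sum x (A - range nn)" using A(1) by simp
    finally have yeq: "y = sum x (A - range nn) + infsum x (A \<inter> range nn)" using A(2) by simp
    have "infsum x (A \<inter> range nn) \<in> E" unfolding E_def by blast
    then have "y \<in> (+) (sum x (A - range nn)) ` E" using yeq by (rule rev_image_eqI)
    then have "y \<in> closure ((+) (sum x (A - range nn)) ` E)" by (rule closure_subset[THEN subsetD])
    moreover have "closure ((+) (sum x (A - range nn)) ` E) \<in> F" unfolding F_def
      by (rule imageI) (simp add: A(1))
    ultimately show "y \<in> \<Union>F" by (rule UnionI[rotated])
  qed
  have "meager (A_I Id x)" unfolding meager_def
  proof (intro exI conjI ballI)
    show "countable F" by (rule cF)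
    show "A_I Id x \<subseteq> \<Union>F" by (rule sub)
  next
    fix T assume "T \<in> F"
    then have "T \<in> (\<lambda>G. closure ((+) (sum x G) ` E)) ` {G. finite G}" using F_def by simp
    then obtain G where T: "T = closure ((+) (sum x G) ` E)" by blast
    have "closure T = T" unfolding T by simp
    moreover have "interior T = {}" using nF[OF \<open>T \<in> F\<close>] by (rule negl_interior)
    ultimately show "nowhere_dense T" unfolding nowhere_dense_def by simp
  qed
  have "negligible (\<Union>F)" using cF nF by (rule negligible_countable_Union)
  then have "negligible (A_I Id x)" by (rule negligible_subset[OF _ sub])
  then have "A_I Id x \<in> null_sets lebesgue" by (simp add: negligible_iff_null_sets)
  note nul = this
  have "is_ideal Id \<and> Fin \<subseteq> Id \<and> Id \<noteq> Fin \<and> meager (A_I Id x) \<and> A_I Id x \<in> null_sets lebesgue"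
    using Id_ideal Id_Fin \<open>meager (A_I Id x)\<close> nul by (simp only: simp_thms)
  then show ?thesis by (rule exI)
qed

end

theorem mainTheorem11:
  fixes x :: "nat \<Rightarrow> real"
  assumes "x \<in> l1_star"
  shows "\<exists>I. is_ideal I \<and> Fin \<subseteq> I \<and> I \<noteq> Fin \<and> meager (A_I I x) \<and> A_I I x \<in> null_sets lebesgue"
proof -
  have sx: "summable (\<lambda>n. \<bar>x n\<bar>)" using assms unfolding l1_star_def by blast
  interpret tl1 x by (rule tl1.intro[OF sx])
  show ?thesis by (rule main)
qed

end
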